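(* For every integer $K\ge1$, $$s(4,K,2)=\begin{cases}\left\lceil\frac{2K}{3}\right\rceil & \text{if } K\equiv 0,2 \text{ or } 5 \pmod 6,\\[2pt] \left\lceil\frac{2K}{3}\right\rceil+1 & \text{otherwise.}\end{cases}$$
   Context: A placement delivery array $S$-PDA$(F,K,Z)$ is an $F\times K$ array $R=(r_{j,k})$, $1\le j\le F$, $1\le k\le K$, over a finite set $S$ such that: (1) each cell is either empty or contains an element of $S$; (2) each column contains exactly $Z$ empty cells; (3) each element of $S$ occurs at most once in each row and at most once in each column; (4) if two distinct nonempty cells satisfy $r_{j_1,k_1}=r_{j_2,k_2}=t\in S$, then the cells $r_{j_1,k_2}$ and $r_{j_2,k_1}$ are empty. For integers $F,K\ge1$, $0\le Z\le F$, define $s(F,K,Z)=\min\{|S| : \text{there exists an } S\text{-PDA}(F,K,Z)\}$. *)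

theory Defs
  imports Complex_Main
begin

text \<open>An F x K array over S: rows 1..F, columns 1..K; None = empty cell.\<close>
definition is_PDA :: "nat \<Rightarrow> nat \<Rightarrow> nat \<Rightarrow> 'a set \<Rightarrow> (nat \<Rightarrow> nat \<Rightarrow> 'a option) \<Rightarrow> bool" where
  "is_PDA F K Z S R \<longleftrightarrow>
     finite S \<and>
     (\<forall>j\<in>{1..F}. \<forall>k\<in>{1..K}. R j k = None \<or> (\<exists>t\<in>S. R j k = Some t)) \<and>
     (\<forall>k\<in>{1..K}. card {j\<in>{1..F}. R j k = None} = Z) \<and>
     (\<forall>t\<in>S. \<forall>j\<in>{1..F}. \<forall>k1\<in>{1..K}. \<forall>k2\<in>{1..K}.
        R j k1 = Some t \<and> R j k2 = Some t \<longrightarrow> k1 = k2) \<and>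
     (\<forall>t\<in>S. \<forall>k\<in>{1..K}. \<forall>j1\<in>{1..F}. \<forall>j2\<in>{1..F}.
        R j1 k = Some t \<and> R j2 k = Some t \<longrightarrow> j1 = j2) \<and>
     (\<forall>t\<in>S. \<forall>j1\<in>{1..F}. \<forall>j2\<in>{1..F}. \<forall>k1\<in>{1..K}. \<forall>k2\<in>{1..K}.
        (j1, k1) \<noteq> (j2, k2) \<and> R j1 k1 = Some t \<and> R j2 k2 = Some t \<longrightarrow>
        R j1 k2 = None \<and> R j2 k1 = None)"

text \<open>Minimal alphabet size; alphabets taken as finite sets of naturals (WLOG by relabelling).\<close>
definition s_PDA :: "nat \<Rightarrow> nat \<Rightarrow> nat \<Rightarrow> nat" where
  "s_PDA F K Z = (LEAST n. \<exists>(S::nat set) R. is_PDA F K Z S R \<and> card S = n)"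

end

theory Submission
  imports Defs
begin


lemma K4:
  fixes \<beta> :: "nat \<Rightarrow> nat"
  assumes H: "\<forall>x\<in>{1..4}. \<forall>y\<in>{1..4}. x \<noteq> y \<longrightarrow>
     \<beta> y + (if (x=j1\<and>y=a)\<or>(x=j2\<and>y=b) then 1 else 0) = \<beta> x + (if (y=j1\<and>x=a)\<or>(y=j2\<and>x=b) then 1 else 0)"
  and r: "j1\<in>{1..4}" "a\<in>{1..4}" "j2\<in>{1..4}" "b\<in>{1..4}"
  and c: "j1\<noteq>a" "j2\<noteq>b" "j1\<noteq>j2" "a\<noteq>j2" "b\<noteq>j1"
  shows False
proof -
  obtain w where w: "w \<in> {1..4}" "w \<noteq> j1" "w \<noteq> a" "w \<noteq> j2"
  proof -
    have "card ({1..4::nat} - {j1,a,j2}) \<ge> 1"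
    proof -
      have "card {j1,a,j2} \<le> 3" by (rule order_trans[OF card_insert_le_m1]) (auto simp: card_insert_le_m1)
      moreover have "card {1..4::nat} - card {j1,a,j2} \<le> card ({1..4::nat} - {j1,a,j2})"
        by (rule diff_card_le_card_Diff) simp
      ultimately show ?thesis by simp
    qed
    then obtain w where "w \<in> {1..4::nat} - {j1,a,j2}" by (metis card.empty ex_in_conv not_one_le_zero)
    then show ?thesis using that by auto
  qed
  have 1: "\<beta> a + 1 = \<beta> j1" using H r c by force
  have 2: "\<beta> j2 = \<beta> j1" using H r c by force
  show False
  proof (cases "b = a")
    case True
    have "\<beta> w = \<beta> j1" using H r c w True by force
    moreover have "\<beta> w = \<beta> a" using H r c w True by force
    ultimately show False using 1 by simp
  next
    case False
    have "\<beta> j2 = \<beta> a" using H r c False by force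
    then show False using 1 2 by simp
  qed
qed


lemma two_subset: assumes "P \<subseteq> {1..4::nat}" "card P = 2"
  shows "P \<in> {{1,2},{1,3},{1,4},{2,3},{2,4},{3,4}}"
proof -
  obtain x y where "P = {x,y}" "x \<noteq> y" using assms(2) card_2_iff by metis
  moreover have "x \<in> {1,2,3,4}" "y \<in> {1,2,3,4}" using assms(1) \<open>P = {x,y}\<close> by auto
  ultimately show ?thesis
    by (elim insertE emptyE) (simp_all add: insert_commute)
qed

context
  fixes K :: nat and S :: "'a set" and R :: "nat \<Rightarrow> nat \<Rightarrow> 'a option"
  assumes P: "is_PDA 4 K 2 S R"
begin

definition Pk where "Pk k = {j\<in>{1..4::nat}. R j k \<noteq> None}"
definition Occ where "Occ t = {(k,j). k\<in>{1..K} \<and> j\<in>{1..4::nat} \<and> R j k = Some t}"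

lemma c1: "finite S" using P unfolding is_PDA_def by (elim conjE)
lemma c2: "\<forall>j\<in>{1..4}. \<forall>k\<in>{1..K}. R j k = None \<or> (\<exists>t\<in>S. R j k = Some t)"
  using P unfolding is_PDA_def by (elim conjE)
lemma c3: "\<forall>k\<in>{1..K}. card {j\<in>{1..4}. R j k = None} = 2"
  using P unfolding is_PDA_def by (elim conjE)
lemma c4: "\<forall>t\<in>S. \<forall>j\<in>{1..4}. \<forall>k1\<in>{1..K}. \<forall>k2\<in>{1..K}.
        R j k1 = Some t \<and> R j k2 = Some t \<longrightarrow> k1 = k2"
  using P unfolding is_PDA_def by (elim conjE)
lemma c6: "\<forall>t\<in>S. \<forall>j1\<in>{1..4}. \<forall>j2\<in>{1..4}. \<forall>k1\<in>{1..K}. \<forall>k2\<in>{1..K}.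
        (j1, k1) \<noteq> (j2, k2) \<and> R j1 k1 = Some t \<and> R j2 k2 = Some t \<longrightarrow>
        R j1 k2 = None \<and> R j2 k1 = None"
  using P unfolding is_PDA_def by (elim conjE)

lemma finS: "finite S" by (rule c1)
lemma ent: "j\<in>{1..4} \<Longrightarrow> k\<in>{1..K} \<Longrightarrow> R j k = Some t \<Longrightarrow> t \<in> S"
  using c2 by force
lemma colN: "k\<in>{1..K} \<Longrightarrow> card {j\<in>{1..4}. R j k = None} = 2"
  using c3 by blast
lemma rowc: "j\<in>{1..4} \<Longrightarrow> k1\<in>{1..K} \<Longrightarrow> k2\<in>{1..K} \<Longrightarrow> R j k1 = Some t \<Longrightarrow> R j k2 = Some t \<Longrightarrow> k1 = k2"
proof -
  assume a: "j\<in>{1..4}" "k1\<in>{1..K}" "k2\<in>{1..K}" "R j k1 = Some t" "R j k2 = Some t"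
  then have "t \<in> S" using ent by blast
  with a c4 show ?thesis by blast
qed
lemma pairc: "j1\<in>{1..4} \<Longrightarrow> j2\<in>{1..4} \<Longrightarrow> k1\<in>{1..K} \<Longrightarrow> k2\<in>{1..K} \<Longrightarrow> (j1,k1) \<noteq> (j2,k2) \<Longrightarrow>
   R j1 k1 = Some t \<Longrightarrow> R j2 k2 = Some t \<Longrightarrow> R j1 k2 = None \<and> R j2 k1 = None"
proof -
  assume a: "j1\<in>{1..4}" "j2\<in>{1..4}" "k1\<in>{1..K}" "k2\<in>{1..K}" "(j1,k1) \<noteq> (j2,k2)"
    "R j1 k1 = Some t" "R j2 k2 = Some t"
  then have "t \<in> S" using ent by blast
  with a c6 show ?thesis by blast
qed

lemma cardPk: assumes "k\<in>{1..K}" shows "card (Pk k) = 2"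
proof -
  define N where "N = {j\<in>{1..4::nat}. R j k = None}"
  have e: "{1..4::nat} = Pk k \<union> N" unfolding Pk_def N_def by auto
  have d: "Pk k \<inter> N = {}" unfolding Pk_def N_def by auto
  have "card (Pk k \<union> N) = card (Pk k) + card N"
    using d by (intro card_Un_disjoint) (auto simp: Pk_def N_def)
  moreover have "card (Pk k \<union> N) = 4" unfolding e[symmetric] by simp
  moreover have "card N = 2" using colN[OF assms] unfolding N_def .
  ultimately show ?thesis by simp
qed

lemma finOcc: "finite (Occ t)"
proof -
  have "Occ t \<subseteq> {1..K} \<times> {1..4}" unfolding Occ_def by auto
  then show ?thesis by (rule finite_subset) simp
qed

lemma inj_snd: "inj_on snd (Occ t)"
  unfolding inj_on_def Occ_def using rowc by auto

lemma Occ_le3: "card (Occ t) \<le> 3"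
proof (cases "Occ t = {}")
  case True then show ?thesis by simp
next
  case False
  then obtain k1 j1 where o1: "(k1,j1) \<in> Occ t" by auto
  have "snd ` Occ t \<subseteq> insert j1 {j\<in>{1..4}. R j k1 = None}"
  proof
    fix j assume "j \<in> snd ` Occ t"
    then obtain k where o: "(k,j) \<in> Occ t" by auto
    show "j \<in> insert j1 {j\<in>{1..4}. R j k1 = None}"
    proof (cases "j = j1")
      case False
      then show ?thesis using o o1 pairc[of j j1 k k1 t] unfolding Occ_def by auto
    qed simp
  qed
  moreover have "k1 \<in> {1..K}" using o1 unfolding Occ_def by auto
  ultimately have "card (snd ` Occ t) \<le> card (insert j1 {j\<in>{1..4}. R j k1 = None})"
    by (intro card_mono) auto
  also have "\<dots> \<le> Suc (card {j\<in>{1..4}. R j k1 = None})"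
    by (simp add: card_insert_if)
  also have "\<dots> = 3" using colN[of k1] \<open>k1 \<in> {1..K}\<close> by simp
  finally have "card (snd ` Occ t) \<le> 3" .
  then show ?thesis using card_image[OF inj_snd] by simp
qed

lemma sum_Occ: "(\<Sum>t\<in>S. card (Occ t)) = 2 * K"
proof -
  have U: "(\<Union>t\<in>S. Occ t) = Sigma {1..K} Pk"
    unfolding Occ_def Pk_def using ent by auto
  have "card (\<Union>t\<in>S. Occ t) = (\<Sum>t\<in>S. card (Occ t))"
    apply (rule card_UN_disjoint[OF finS])
     apply (simp add: finOcc)
    apply (auto simp: Occ_def)
    done
  moreover have "card (Sigma {1..K} Pk) = (\<Sum>k\<in>{1..K}. card (Pk k))"
    by (rule card_SigmaI) (auto simp: Pk_def)
  moreover have "(\<Sum>k\<in>{1..K}. card (Pk k)) = 2 * K"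
    using cardPk by simp
  ultimately show ?thesis using U by simp
qed

lemma excess: "3 * card S = 2 * K + (\<Sum>t\<in>S. 3 - card (Occ t))"
proof -
  have "(\<Sum>t\<in>S. 3 - card (Occ t)) + (\<Sum>t\<in>S. card (Occ t)) = (\<Sum>t\<in>S. 3::nat)"
    by (subst sum.distrib[symmetric]) (rule sum.cong, auto simp: Occ_le3)
  then show ?thesis using sum_Occ by simp
qed


lemma Pk_sub: "Pk k \<subseteq> {1..4}" unfolding Pk_def by auto

definition Ap where "Ap p = {k\<in>{1..K}. Pk k = p}"
definition fx where "fx x k = the (R x k)"
definition Bs where "Bs y = {t\<in>S. card (Occ t) = 3 \<and> (\<forall>k. (k,y) \<notin> Occ t)}"

lemma finAp: "finite (Ap p)" unfolding Ap_def by simp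

lemma inj_fx: assumes "x\<in>{1..4}" "y \<in> {1..4}" shows "inj_on (fx x) (Ap {x,y})"
proof (rule inj_onI)
  fix k k' assume k: "k \<in> Ap {x,y}" and k': "k' \<in> Ap {x,y}" and e: "fx x k = fx x k'"
  have kr: "k \<in> {1..K}" "k' \<in> {1..K}" using k k' unfolding Ap_def by auto
  have "Pk k = {x,y}" "Pk k' = {x,y}" using k k' unfolding Ap_def by auto
  then have "x \<in> Pk k" "x \<in> Pk k'" by auto
  then have n: "R x k \<noteq> None" "R x k' \<noteq> None" unfolding Pk_def by auto
  obtain t where t: "R x k = Some t" using n(1) by blast
  obtain t' where t': "R x k' = Some t'" using n(2) by blast
  have "t = t'" using e t t' unfolding fx_def by simp
  then show "k = k'" using rowc[of x k k' t] assms(1) kr t t' by blast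
qed

lemma B_sub: assumes "x\<in>{1..4}" "y \<in> {1..4}" "x \<noteq> y" shows "Bs y \<subseteq> fx x ` Ap {x,y}"
proof
  fix t assume t: "t \<in> Bs y"
  have s1: "snd ` Occ t \<subseteq> {1..4} - {y}" using t unfolding Bs_def Occ_def by auto
  have "card (snd ` Occ t) = 3" using t card_image[OF inj_snd] unfolding Bs_def by simp
  moreover have "card ({1..4::nat} - {y}) = 3" using assms by simp
  ultimately have "snd ` Occ t = {1..4} - {y}" using s1 by (intro card_subset_eq) auto
  then have "x \<in> snd ` Occ t" using assms by auto
  then obtain k where o: "(k,x) \<in> Occ t" by force
  then have k: "k\<in>{1..K}" "R x k = Some t" unfolding Occ_def by auto
  have "Pk k \<subseteq> {x,y}"
  proof
    fix j assume j: "j \<in> Pk k"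
    show "j \<in> {x,y}"
    proof (rule ccontr)
      assume "j \<notin> {x,y}"
      have "j \<in> {1..4}" using j Pk_sub[of k] by blast
      then have "j \<in> snd ` Occ t" using \<open>j \<notin> {x,y}\<close> \<open>snd ` Occ t = {1..4} - {y}\<close> by simp
      then obtain k' where o': "(k',j) \<in> Occ t" by force
      then have "R j k = None" using pairc[of x j k k' t] o \<open>j \<notin> {x,y}\<close> unfolding Occ_def by auto
      then show False using j unfolding Pk_def by auto
    qed
  qed
  moreover have "card (Pk k) = 2" using cardPk k by simp
  moreover have "card {x,y} = 2" using assms by simp
  ultimately have "Pk k = {x,y}" by (intro card_subset_eq) auto
  then have "k \<in> Ap {x,y}" using k unfolding Ap_def by simp
  moreover have "fx x k = t" using k unfolding fx_def by simp
  ultimately show "t \<in> fx x ` Ap {x,y}" by force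
qed

lemma img_sub: assumes "x\<in>{1..4}" "y \<in> {1..4}" "x \<noteq> y"
  shows "fx x ` Ap {x,y} \<subseteq> {t\<in>S. \<forall>k. (k,y) \<notin> Occ t}"
proof
  fix t assume "t \<in> fx x ` Ap {x,y}"
  then obtain k where k: "k \<in> Ap {x,y}" "t = fx x k" by auto
  have kk: "k\<in>{1..K}" "Pk k = {x,y}" using k unfolding Ap_def by auto
  then have "R x k \<noteq> None" "R y k \<noteq> None" unfolding Pk_def by auto
  then have Rx: "R x k = Some t" using k unfolding fx_def by auto
  then have "t \<in> S" using ent assms kk by blast
  moreover have "\<forall>k'. (k',y) \<notin> Occ t"
  proof (intro allI notI)
    fix k' assume "(k',y) \<in> Occ t"
    then have "R y k = None" using pairc[of x y k k' t] Rx assms kk unfolding Occ_def by auto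
    then show False using \<open>R y k \<noteq> None\<close> by simp
  qed
  ultimately show "t \<in> {t\<in>S. \<forall>k. (k,y) \<notin> Occ t}" by simp
qed

lemma main_eq: assumes "x\<in>{1..4}" "y \<in> {1..4}" "x \<noteq> y"
  shows "card (Ap {x,y}) = card (Bs y) + card {t \<in> fx x ` Ap {x,y}. card (Occ t) \<noteq> 3}"
proof -
  have e: "fx x ` Ap {x,y} = Bs y \<union> {t \<in> fx x ` Ap {x,y}. card (Occ t) \<noteq> 3}"
    using B_sub[OF assms] img_sub[OF assms] unfolding Bs_def by blast
  have "card (fx x ` Ap {x,y}) = card (Bs y \<union> {t \<in> fx x ` Ap {x,y}. card (Occ t) \<noteq> 3})"
    using e by simp
  also have "\<dots> = card (Bs y) + card {t \<in> fx x ` Ap {x,y}. card (Occ t) \<noteq> 3}"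
    by (rule card_Un_disjoint) (auto simp: Bs_def finAp intro: finite_subset[OF _ finS])
  finally show ?thesis using card_image[OF inj_fx[OF assms(1,2)]] by simp
qed

lemma Ap_sym: "Ap {x,y} = Ap {y,x}" by (simp add: insert_commute)

lemma lower0: assumes "(\<Sum>t\<in>S. 3 - card (Occ t)) = 0" shows "6 dvd K"
proof -
  have all3: "\<forall>t\<in>S. card (Occ t) = 3" using assms finS Occ_le3 by (simp add: le_antisym)
  have eqc: "card (Ap {x,y}) = card (Bs y)" if "x\<in>{1..4}" "y \<in> {1..4}" "x \<noteq> y" for x y
  proof -
    have E: "{t \<in> fx x ` Ap {x,y}. card (Occ t) \<noteq> 3} = {}"
      using img_sub[OF that] all3 by blast
    show ?thesis using main_eq[OF that] unfolding E by simp
  qed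
  define b where "b = card (Bs 1)"
  have cy: "card (Bs y) = b" if "y\<in>{2,3,4}" for y
    using eqc[of 1 y] eqc[of y 1] Ap_sym[of 1 y] that unfolding b_def by auto
  have cA: "card (Ap p) = b" if "p \<in> {{1,2},{1,3},{1,4},{2,3},{2,4},{3,4}}" for p
    using that eqc[of 1 2] eqc[of 1 3] eqc[of 1 4] eqc[of 2 3] eqc[of 2 4] eqc[of 3 4] cy
    by auto
  define I :: "nat set set" where "I = {{1,2},{1,3},{1,4},{2,3},{2,4},{3,4}}"
  have U: "{1..K} = (\<Union>p\<in>I. Ap p)"
    unfolding I_def Ap_def using two_subset Pk_sub cardPk by fastforce
  have "card (\<Union>p\<in>I. Ap p) = (\<Sum>p\<in>I. card (Ap p))"
    by (rule card_UN_disjoint) (auto simp: I_def finAp Ap_def)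
  also have "\<dots> = (\<Sum>p\<in>I. b)" using cA unfolding I_def by (intro sum.cong) auto
  also have "\<dots> = card I * b" by simp
  also have "card I = 6" unfolding I_def by (simp add: doubleton_eq_iff)
  finally have "card {1..K} = 6 * b" by (simp only: U)
  then have "K = 6 * b" by simp
  then show ?thesis by simp
qed

lemma two_pick: assumes "card P = 2" "z \<in> P" shows "\<exists>a. a \<noteq> z \<and> P = {z,a}"
proof -
  obtain u v where "P = {u,v}" "u \<noteq> v" using assms(1) card_2_iff by metis
  then show ?thesis using assms(2) by (auto simp: insert_commute)
qed

lemma lower1: "(\<Sum>t\<in>S. 3 - card (Occ t)) \<noteq> 1"
proof
  assume s1: "(\<Sum>t\<in>S. 3 - card (Occ t)) = 1"
  obtain t0 where t0: "t0 \<in> S" "3 - card (Occ t0) \<noteq> 0"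
  proof (rule ccontr)
    assume "\<not> thesis"
    then have "\<forall>t\<in>S. 3 - card (Occ t) = 0" using that by blast
    then have "(\<Sum>t\<in>S. 3 - card (Occ t)) = 0" by simp
    then show False using s1 by simp
  qed
  have "(\<Sum>t\<in>S. 3 - card (Occ t)) = (3 - card (Occ t0)) + (\<Sum>t\<in>S-{t0}. 3 - card (Occ t))"
    using sum.remove[OF finS t0(1)] by simp
  then have r0: "(\<Sum>t\<in>S-{t0}. 3 - card (Occ t)) = 0" and c0: "card (Occ t0) = 2"
    using s1 t0(2) Occ_le3[of t0] by auto
  have oth: "card (Occ t) = 3" if "t \<in> S" "t \<noteq> t0" for t
  proof -
    have "3 - card (Occ t) = 0" using r0 that finS by simp
    then show ?thesis using Occ_le3[of t] by simp
  qed
  obtain p q where pq: "Occ t0 = {p,q}" "p \<noteq> q" using c0 card_2_iff by metis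
  obtain k1 j1 where p: "p = (k1,j1)" by (cases p)
  obtain k2 j2 where q: "q = (k2,j2)" by (cases q)
  have o1: "k1\<in>{1..K}" "j1\<in>{1..4}" "R j1 k1 = Some t0" using pq p unfolding Occ_def by auto
  have o2: "k2\<in>{1..K}" "j2\<in>{1..4}" "R j2 k2 = Some t0" using pq q unfolding Occ_def by auto
  have jj: "j1 \<noteq> j2"
  proof
    assume "j1 = j2"
    then have "k1 = k2" using rowc[of j1 k1 k2 t0] o1 o2 by simp
    then show False using pq p q \<open>j1 = j2\<close> by simp
  qed
  have N: "R j1 k2 = None" "R j2 k1 = None" using pairc[of j1 j2 k1 k2 t0] o1 o2 jj by auto
  obtain a where a: "a \<noteq> j1" "Pk k1 = {j1,a}"
    using two_pick[OF cardPk[OF o1(1)], of j1] o1 unfolding Pk_def by auto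
  obtain b where b: "b \<noteq> j2" "Pk k2 = {j2,b}"
    using two_pick[OF cardPk[OF o2(1)], of j2] o2 unfolding Pk_def by auto
  have ar: "a \<in> {1..4}" using a Pk_sub[of k1] by blast
  have br: "b \<in> {1..4}" using b Pk_sub[of k2] by blast
  have aj2: "a \<noteq> j2" using a(2) N(2) unfolding Pk_def by (metis (mono_tags, lifting) insertCI mem_Collect_eq)
  have bj1: "b \<noteq> j1" using b(2) N(1) unfolding Pk_def by (metis (mono_tags, lifting) insertCI mem_Collect_eq)
  have ext: "{t \<in> fx x ` Ap {x,y}. card (Occ t) \<noteq> 3} =
     (if (x=j1\<and>y=a)\<or>(x=j2\<and>y=b) then {t0} else {})"
    if xy: "x\<in>{1..4}" "y \<in> {1..4}" "x \<noteq> y" for x y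
  proof -
    have sub: "{t \<in> fx x ` Ap {x,y}. card (Occ t) \<noteq> 3} \<subseteq> {t0}"
      using img_sub[OF xy] oth by blast
    have "t0 \<in> fx x ` Ap {x,y} \<longleftrightarrow> (x=j1\<and>y=a)\<or>(x=j2\<and>y=b)"
    proof
      assume "t0 \<in> fx x ` Ap {x,y}"
      then obtain k where k: "k \<in> Ap {x,y}" "t0 = fx x k" by auto
      have kk: "k\<in>{1..K}" "Pk k = {x,y}" using k unfolding Ap_def by auto
      then have "x \<in> Pk k" by simp
      then have "R x k = Some t0" using k unfolding fx_def Pk_def by auto
      then have "(k,x) \<in> Occ t0" using kk xy unfolding Occ_def by auto
      then have "(k,x) = (k1,j1) \<or> (k,x) = (k2,j2)" using pq p q by auto
      then show "(x=j1\<and>y=a)\<or>(x=j2\<and>y=b)"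
      proof
        assume "(k,x) = (k1,j1)"
        then have "{x,y} = {j1,a}" "x = j1" using kk a by auto
        then show ?thesis using xy by (auto simp: doubleton_eq_iff)
      next
        assume "(k,x) = (k2,j2)"
        then have "{x,y} = {j2,b}" "x = j2" using kk b by auto
        then show ?thesis using xy by (auto simp: doubleton_eq_iff)
      qed
    next
      assume "(x=j1\<and>y=a)\<or>(x=j2\<and>y=b)"
      then show "t0 \<in> fx x ` Ap {x,y}"
      proof
        assume h: "x=j1\<and>y=a"
        have "k1 \<in> Ap {x,y}" using h a o1 unfolding Ap_def by auto
        moreover have "fx x k1 = t0" using h o1 unfolding fx_def by simp
        ultimately show ?thesis by force
      next
        assume h: "x=j2\<and>y=b"
        have "k2 \<in> Ap {x,y}" using h b o2 unfolding Ap_def by auto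
        moreover have "fx x k2 = t0" using h o2 unfolding fx_def by simp
        ultimately show ?thesis by force
      qed
    qed
    then show ?thesis using sub c0 by auto
  qed
  have H: "\<forall>x\<in>{1..4}. \<forall>y\<in>{1..4}. x \<noteq> y \<longrightarrow>
     card (Bs y) + (if (x=j1\<and>y=a)\<or>(x=j2\<and>y=b) then 1 else 0) =
     card (Bs x) + (if (y=j1\<and>x=a)\<or>(y=j2\<and>x=b) then 1 else 0)"
  proof (intro ballI impI)
    fix x y :: nat assume xy: "x\<in>{1..4}" "y \<in> {1..4}" "x \<noteq> y"
    have e1: "card (Ap {x,y}) = card (Bs y) + (if (x=j1\<and>y=a)\<or>(x=j2\<and>y=b) then 1 else 0)"
      using main_eq[OF xy] unfolding ext[OF xy] by simp
    have xy': "y\<in>{1..4}" "x \<in> {1..4}" "y \<noteq> x" using xy by auto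
    have e2: "card (Ap {y,x}) = card (Bs x) + (if (y=j1\<and>x=a)\<or>(y=j2\<and>x=b) then 1 else 0)"
      using main_eq[OF xy'] unfolding ext[OF xy'] by simp
    show "card (Bs y) + (if (x=j1\<and>y=a)\<or>(x=j2\<and>y=b) then 1 else 0) =
     card (Bs x) + (if (y=j1\<and>x=a)\<or>(y=j2\<and>x=b) then 1 else 0)"
      using e1 e2 Ap_sym[of x y] by simp
  qed
  show False
    by (rule K4[of "\<lambda>y. card (Bs y)", OF H o1(2) ar o2(2) br]) (use a b jj aj2 bj1 in auto)
qed

lemma lower_all: "2 * K \<le> 3 * card S" "3 * card S \<noteq> 2 * K + 1" "3 * card S = 2 * K \<Longrightarrow> 6 dvd K"
  using excess lower0 lower1 by auto

end


definition glue :: "nat \<Rightarrow> nat \<Rightarrow> (nat \<Rightarrow> nat \<Rightarrow> nat option) \<Rightarrow> (nat \<Rightarrow> nat \<Rightarrow> nat option) \<Rightarrow> nat \<Rightarrow> nat \<Rightarrow> nat option" where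
  "glue K1 n1 R1 R2 j k = (if k \<le> K1 then R1 j k else map_option (\<lambda>t. t + n1) (R2 j (k - K1)))"


lemma PDA_D:
  assumes "is_PDA F K Z S R"
  shows "\<forall>j\<in>{1..F}. \<forall>k\<in>{1..K}. R j k = None \<or> (\<exists>t\<in>S. R j k = Some t)"
   and "\<forall>k\<in>{1..K}. card {j\<in>{1..F}. R j k = None} = Z"
   and "\<forall>t\<in>S. \<forall>j\<in>{1..F}. \<forall>k1\<in>{1..K}. \<forall>k2\<in>{1..K}.
        R j k1 = Some t \<and> R j k2 = Some t \<longrightarrow> k1 = k2"
   and "\<forall>t\<in>S. \<forall>k\<in>{1..K}. \<forall>j1\<in>{1..F}. \<forall>j2\<in>{1..F}.
        R j1 k = Some t \<and> R j2 k = Some t \<longrightarrow> j1 = j2"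
   and "\<forall>t\<in>S. \<forall>j1\<in>{1..F}. \<forall>j2\<in>{1..F}. \<forall>k1\<in>{1..K}. \<forall>k2\<in>{1..K}.
        (j1, k1) \<noteq> (j2, k2) \<and> R j1 k1 = Some t \<and> R j2 k2 = Some t \<longrightarrow>
        R j1 k2 = None \<and> R j2 k1 = None"
  using assms unfolding is_PDA_def by blast+

lemma pda_union:
  assumes A: "is_PDA F K1 Z {..<n1} R1" and B: "is_PDA F K2 Z {..<n2} R2"
  shows "is_PDA F (K1+K2) Z {..<n1+n2} (glue K1 n1 R1 R2)"
proof -
  let ?R = "glue K1 n1 R1 R2"
  note a = PDA_D[OF A] and b = PDA_D[OF B]
  have v1: "t < n1" if "j\<in>{1..F}" "k\<in>{1..K1}" "R1 j k = Some t" for j k t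
    using bspec[OF bspec[OF a(1) that(1)] that(2)] that(3) by auto
  have v2: "t < n2" if "j\<in>{1..F}" "k\<in>{1..K2}" "R2 j k = Some t" for j k t
    using bspec[OF bspec[OF b(1) that(1)] that(2)] that(3) by auto
  have A4: "k1 = k2" if "j\<in>{1..F}" "k1\<in>{1..K1}" "k2\<in>{1..K1}" "R1 j k1 = Some t" "R1 j k2 = Some t" for t j k1 k2
  proof -
    have "t \<in> {..<n1}" using v1 that by simp
    from bspec[OF bspec[OF bspec[OF bspec[OF a(3) this] that(1)] that(2)] that(3)] that(4,5) show ?thesis by simp
  qed
  have B4: "k1 = k2" if "j\<in>{1..F}" "k1\<in>{1..K2}" "k2\<in>{1..K2}" "R2 j k1 = Some t" "R2 j k2 = Some t" for t j k1 k2
  proof -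
    have "t \<in> {..<n2}" using v2 that by simp
    from bspec[OF bspec[OF bspec[OF bspec[OF b(3) this] that(1)] that(2)] that(3)] that(4,5) show ?thesis by simp
  qed
  have A5: "j1 = j2" if "k\<in>{1..K1}" "j1\<in>{1..F}" "j2\<in>{1..F}" "R1 j1 k = Some t" "R1 j2 k = Some t" for t k j1 j2
  proof -
    have "t \<in> {..<n1}" using v1 that by simp
    from bspec[OF bspec[OF bspec[OF bspec[OF a(4) this] that(1)] that(2)] that(3)] that(4,5) show ?thesis by simp
  qed
  have B5: "j1 = j2" if "k\<in>{1..K2}" "j1\<in>{1..F}" "j2\<in>{1..F}" "R2 j1 k = Some t" "R2 j2 k = Some t" for t k j1 j2
  proof -
    have "t \<in> {..<n2}" using v2 that by simp
    from bspec[OF bspec[OF bspec[OF bspec[OF b(4) this] that(1)] that(2)] that(3)] that(4,5) show ?thesis by simp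
  qed
  have A6: "R1 j1 k2 = None \<and> R1 j2 k1 = None" if "j1\<in>{1..F}" "j2\<in>{1..F}" "k1\<in>{1..K1}" "k2\<in>{1..K1}"
    "(j1,k1) \<noteq> (j2,k2)" "R1 j1 k1 = Some t" "R1 j2 k2 = Some t" for t j1 j2 k1 k2
  proof -
    have "t \<in> {..<n1}" using v1 that by simp
    from bspec[OF bspec[OF bspec[OF bspec[OF bspec[OF a(5) this] that(1)] that(2)] that(3)] that(4)] that(5-7)
    show ?thesis by simp
  qed
  have B6: "R2 j1 k2 = None \<and> R2 j2 k1 = None" if "j1\<in>{1..F}" "j2\<in>{1..F}" "k1\<in>{1..K2}" "k2\<in>{1..K2}"
    "(j1,k1) \<noteq> (j2,k2)" "R2 j1 k1 = Some t" "R2 j2 k2 = Some t" for t j1 j2 k1 k2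
  proof -
    have "t \<in> {..<n2}" using v2 that by simp
    from bspec[OF bspec[OF bspec[OF bspec[OF bspec[OF b(5) this] that(1)] that(2)] that(3)] that(4)] that(5-7)
    show ?thesis by simp
  qed
  have L: "?R j k = R1 j k" if "k \<le> K1" for j k using that unfolding glue_def by simp
  have Rt: "?R j k = map_option (\<lambda>t. t + n1) (R2 j (k - K1))" if "\<not> k \<le> K1" for j k
    using that unfolding glue_def by simp
  have cls: "(k \<le> K1 \<and> k\<in>{1..K1} \<and> R1 j k = Some t \<and> t < n1) \<or>
             (\<not> k \<le> K1 \<and> k - K1 \<in> {1..K2} \<and> n1 \<le> t \<and> R2 j (k - K1) = Some (t - n1) \<and> t - n1 < n2)"
    if hh: "j\<in>{1..F}" "k\<in>{1..K1+K2}" "?R j k = Some t" for j k t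
  proof (cases "k \<le> K1")
    case True
    then have "k\<in>{1..K1}" "R1 j k = Some t" using hh L by auto
    then show ?thesis using True v1[OF hh(1)] by blast
  next
    case False
    then obtain u where u: "R2 j (k - K1) = Some u" "t = u + n1" using hh Rt by auto
    have "k - K1 \<in> {1..K2}" using False hh(2) by auto
    then show ?thesis using False u v2[OF hh(1) _ u(1)] by auto
  qed
  show ?thesis
    unfolding is_PDA_def
  proof (intro conjI)
    show "finite {..<n1+n2}" by simp
    show "\<forall>j\<in>{1..F}. \<forall>k\<in>{1..K1+K2}. ?R j k = None \<or> (\<exists>t\<in>{..<n1+n2}. ?R j k = Some t)"
    proof (intro ballI)
      fix j k assume j: "j\<in>{1..F}" and k: "k\<in>{1..K1+K2}"
      show "?R j k = None \<or> (\<exists>t\<in>{..<n1+n2}. ?R j k = Some t)"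
      proof (cases "?R j k")
        case (Some t)
        from cls[OF j k Some] have "t < n1 + n2" by linarith
        then show ?thesis using Some by auto
      qed simp
    qed
    show "\<forall>k\<in>{1..K1+K2}. card {j\<in>{1..F}. ?R j k = None} = Z"
    proof
      fix k assume k: "k\<in>{1..K1+K2}"
      show "card {j\<in>{1..F}. ?R j k = None} = Z"
      proof (cases "k \<le> K1")
        case True
        then have "{j\<in>{1..F}. ?R j k = None} = {j\<in>{1..F}. R1 j k = None}" using L by simp
        moreover have "k \<in> {1..K1}" using k True by simp
        ultimately show ?thesis using a(2) by simp
      next
        case False
        then have "{j\<in>{1..F}. ?R j k = None} = {j\<in>{1..F}. R2 j (k - K1) = None}" using Rt by simp
        moreover have "k - K1 \<in> {1..K2}" using k False by auto
        ultimately show ?thesis using b(2) by simp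
      qed
    qed
    show "\<forall>t\<in>{..<n1+n2}. \<forall>j\<in>{1..F}. \<forall>k1\<in>{1..K1+K2}. \<forall>k2\<in>{1..K1+K2}.
        ?R j k1 = Some t \<and> ?R j k2 = Some t \<longrightarrow> k1 = k2"
    proof (intro ballI impI, elim conjE)
      fix t j k1 k2 assume j: "j\<in>{1..F}" and k1: "k1\<in>{1..K1+K2}" and k2: "k2\<in>{1..K1+K2}"
        and e1: "?R j k1 = Some t" and e2: "?R j k2 = Some t"
      from cls[OF j k1 e1] cls[OF j k2 e2] show "k1 = k2"
      proof (elim disjE conjE)
        assume "k1\<in>{1..K1}" "R1 j k1 = Some t" "k2\<in>{1..K1}" "R1 j k2 = Some t"
        then show ?thesis using A4 j by blast
      next
        assume h: "\<not> k1 \<le> K1" "k1 - K1 \<in> {1..K2}" "R2 j (k1 - K1) = Some (t - n1)"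
          "\<not> k2 \<le> K1" "k2 - K1 \<in> {1..K2}" "R2 j (k2 - K1) = Some (t - n1)"
        then have "k1 - K1 = k2 - K1" using B4[OF j] by blast
        then show ?thesis using h(1,4) by simp
      qed linarith+
    qed
    show "\<forall>t\<in>{..<n1+n2}. \<forall>k\<in>{1..K1+K2}. \<forall>j1\<in>{1..F}. \<forall>j2\<in>{1..F}.
        ?R j1 k = Some t \<and> ?R j2 k = Some t \<longrightarrow> j1 = j2"
    proof (intro ballI impI, elim conjE)
      fix t k j1 j2 assume k: "k\<in>{1..K1+K2}" and j1: "j1\<in>{1..F}" and j2: "j2\<in>{1..F}"
        and e1: "?R j1 k = Some t" and e2: "?R j2 k = Some t"
      from cls[OF j1 k e1] cls[OF j2 k e2] show "j1 = j2"
      proof (elim disjE conjE)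
        assume "k\<in>{1..K1}" "R1 j1 k = Some t" "R1 j2 k = Some t"
        then show ?thesis using A5 j1 j2 by blast
      next
        assume h: "k - K1 \<in> {1..K2}" "R2 j1 (k - K1) = Some (t - n1)" "R2 j2 (k - K1) = Some (t - n1)"
        then show ?thesis using B5 j1 j2 by blast
      qed linarith+
    qed
    show "\<forall>t\<in>{..<n1+n2}. \<forall>j1\<in>{1..F}. \<forall>j2\<in>{1..F}. \<forall>k1\<in>{1..K1+K2}. \<forall>k2\<in>{1..K1+K2}.
        (j1, k1) \<noteq> (j2, k2) \<and> ?R j1 k1 = Some t \<and> ?R j2 k2 = Some t \<longrightarrow>
        ?R j1 k2 = None \<and> ?R j2 k1 = None"
    proof (intro ballI impI, elim conjE)
      fix t j1 j2 k1 k2 assume j1: "j1\<in>{1..F}" and j2: "j2\<in>{1..F}" and k1: "k1\<in>{1..K1+K2}"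
        and k2: "k2\<in>{1..K1+K2}" and ne: "(j1, k1) \<noteq> (j2, k2)"
        and e1: "?R j1 k1 = Some t" and e2: "?R j2 k2 = Some t"
      from cls[OF j1 k1 e1] cls[OF j2 k2 e2]
      show "?R j1 k2 = None \<and> ?R j2 k1 = None"
      proof (elim disjE conjE)
        assume h: "k1 \<le> K1" "k1 \<in> {1..K1}" "R1 j1 k1 = Some t"
          "k2 \<le> K1" "k2 \<in> {1..K1}" "R1 j2 k2 = Some t"
        then have "R1 j1 k2 = None \<and> R1 j2 k1 = None" using A6[OF j1 j2 h(2) h(5) ne] by blast
        then show ?thesis using L h(1,4) by simp
      next
        assume h: "\<not> k1 \<le> K1" "k1 - K1 \<in> {1..K2}" "R2 j1 (k1 - K1) = Some (t - n1)"
          "\<not> k2 \<le> K1" "k2 - K1 \<in> {1..K2}" "R2 j2 (k2 - K1) = Some (t - n1)"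
        have "(j1, k1 - K1) \<noteq> (j2, k2 - K1)" using ne h(1,4) by auto
        then have "R2 j1 (k2 - K1) = None \<and> R2 j2 (k1 - K1) = None"
          using B6[OF j1 j2 h(2) h(5)] h(3,6) by blast
        then show ?thesis using Rt h(1,4) by simp
      qed linarith+
    qed
  qed
qed



definition tb :: "nat option list list \<Rightarrow> nat \<Rightarrow> nat \<Rightarrow> nat option" where
 "tb L j k = (if 1 \<le> j \<and> j \<le> length L \<and> 1 \<le> k \<and> k \<le> length (L!(j-1)) then L!(j-1)!(k-1) else None)"

lemma coll: "{j \<in> set xs. P j} = set (filter P xs)" by auto
lemma i4: "{1..4::nat} = set [1,2,3,4]" by auto
lemma i1: "{1..1::nat} = set [1]" by auto
lemma i2: "{1..2::nat} = set [1,2]" by auto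
lemma i3: "{1..3::nat} = set [1,2,3]" by auto
lemma i5: "{1..5::nat} = set [1,2,3,4,5]" by auto
lemma i6: "{1..6::nat} = set [1,2,3,4,5,6]" by auto
lemma l2: "{..<2::nat} = set [0,1]" by auto
lemma l3: "{..<3::nat} = set [0,1,2]" by auto
lemma l4: "{..<4::nat} = set [0,1,2,3]" by auto

lemma r6: "is_PDA 4 6 2 {..<4} (tb [[Some 0, Some 2, Some 3, None, None, None],
  [Some 1, None, None, Some 2, Some 3, None],[None, Some 1, None, Some 0, None, Some 3],
  [None, None, Some 1, None, Some 0, Some 2]])"
  unfolding is_PDA_def i4 i6 l4 coll card_set
  by (simp add: tb_def)

lemma r1: "is_PDA 4 1 2 {..<2} (tb [[Some 0],[Some 1],[None],[None]])"
  unfolding is_PDA_def i4 i1 l2 coll card_set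
  by (simp add: tb_def)

lemma r2: "is_PDA 4 2 2 {..<2} (tb [[Some 0, None],[Some 1, None],[None, Some 0],[None, Some 1]])"
  unfolding is_PDA_def i4 i2 l2 coll card_set
  by (simp add: tb_def)

lemma r3: "is_PDA 4 3 2 {..<3} (tb [[Some 0, Some 2, None],[Some 1, None, Some 2],[None, Some 1, Some 0],[None, None, None]])"
  unfolding is_PDA_def i4 i3 l3 coll card_set
  by (simp add: tb_def)

lemma r4: "is_PDA 4 4 2 {..<4} (tb [[Some 0, Some 2, None, None],[Some 1, Some 3, None, None],
   [None, None, Some 0, Some 2],[None, None, Some 1, Some 3]])"
  unfolding is_PDA_def i4 l4 coll card_set
  by (simp add: tb_def)

lemma r5: "is_PDA 4 5 2 {..<4} (tb [[Some 0, Some 2, Some 3, None, None],[Some 1, None, None, Some 2, Some 3],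
   [None, Some 1, None, Some 0, None],[None, None, Some 1, None, Some 0]])"
  unfolding is_PDA_def i4 i5 l4 coll card_set
  by (simp add: tb_def)


lemma pda0: "is_PDA 4 0 2 {} R" unfolding is_PDA_def by simp

lemma blocks: "\<exists>R. is_PDA 4 (6*m) 2 {..<4*m} R"
proof (induction m)
  case 0 show ?case using pda0 by auto
next
  case (Suc m)
  then obtain R where "is_PDA 4 (6*m) 2 {..<4*m} R" by auto
  from pda_union[OF this r6] show ?case by (auto simp: algebra_simps)
qed

definition fK :: "nat \<Rightarrow> nat" where
  "fK K = 4 * (K div 6) + (if K mod 6 = 0 then 0 else if K mod 6 = 1 then 2 else if K mod 6 = 2 then 2
     else if K mod 6 = 3 then 3 else 4)"

lemma fK_alt: "fK K = (if K mod 6 \<in> {0, 2, 5} then (2*K+2) div 3 else (2*K+2) div 3 + 1)"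
proof -
  obtain m r where K: "K = 6*m + r" "r < 6" by (metis div_mod_decomp mod_less_divisor zero_less_numeral mult.commute)
  then have "K div 6 = m" "K mod 6 = r" by auto
  moreover have "(2*K+2) div 3 = 4*m + (2*r+2) div 3" using K by simp
  moreover have "r = 0 \<or> r = 1 \<or> r = 2 \<or> r = 3 \<or> r = 4 \<or> r = 5" using K by auto
  ultimately show ?thesis unfolding fK_def by auto
qed

lemma arith_s:
  assumes "s \<le> fK K" "2*K \<le> 3*s" "3*s \<noteq> 2*K+1" "3*s = 2*K \<Longrightarrow> 6 dvd K"
  shows "s = fK K"
proof -
  obtain m r where K: "K = 6*m + r" "r < 6" by (metis div_mod_decomp mod_less_divisor zero_less_numeral mult.commute)
  then have d: "K div 6 = m" "K mod 6 = r" by auto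
  have "r = 0 \<or> r = 1 \<or> r = 2 \<or> r = 3 \<or> r = 4 \<or> r = 5" using K by auto
  then show ?thesis
  proof (elim disjE)
    assume r: "r = 0"
    have f: "fK K = 4*m + 0" using r unfolding fK_def d by simp
    show ?thesis using assms(1,2) f K r by linarith
  next
    assume r: "r = 1"
    have f: "fK K = 4*m + 2" using r unfolding fK_def d by simp
    have nd: "\<not> 6 dvd K" using K r by presburger
    have h4: "3*s \<noteq> 2*K" using assms(4) nd by blast
    have a1: "s \<le> 4*m + 2" using assms(1) f by simp
    show ?thesis unfolding f using a1 assms(2,3) h4 K r by presburger
  next
    assume r: "r = 2"
    have f: "fK K = 4*m + 2" using r unfolding fK_def d by simp
    have nd: "\<not> 6 dvd K" using K r by presburger
    have h4: "3*s \<noteq> 2*K" using assms(4) nd by blast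
    have a1: "s \<le> 4*m + 2" using assms(1) f by simp
    show ?thesis unfolding f using a1 assms(2,3) h4 K r by presburger
  next
    assume r: "r = 3"
    have f: "fK K = 4*m + 3" using r unfolding fK_def d by simp
    have nd: "\<not> 6 dvd K" using K r by presburger
    have h4: "3*s \<noteq> 2*K" using assms(4) nd by blast
    have a1: "s \<le> 4*m + 3" using assms(1) f by simp
    show ?thesis unfolding f using a1 assms(2,3) h4 K r by presburger
  next
    assume r: "r = 4"
    have f: "fK K = 4*m + 4" using r unfolding fK_def d by simp
    have nd: "\<not> 6 dvd K" using K r by presburger
    have h4: "3*s \<noteq> 2*K" using assms(4) nd by blast
    have a1: "s \<le> 4*m + 4" using assms(1) f by simp
    show ?thesis unfolding f using a1 assms(2,3) h4 K r by presburger
  next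
    assume r: "r = 5"
    have f: "fK K = 4*m + 4" using r unfolding fK_def d by simp
    have nd: "\<not> 6 dvd K" using K r by presburger
    have h4: "3*s \<noteq> 2*K" using assms(4) nd by blast
    have a1: "s \<le> 4*m + 4" using assms(1) f by simp
    show ?thesis unfolding f using a1 assms(2,3) h4 K r by presburger
  qed
qed


lemma tails: "\<exists>R. is_PDA 4 (K mod 6) 2 {..<fK K - 4 * (K div 6)} R"
proof -
  have "K mod 6 < 6" by simp
  then consider "K mod 6 = 0" | "K mod 6 = 1" | "K mod 6 = 2" | "K mod 6 = 3" | "K mod 6 = 4" | "K mod 6 = 5"
    by linarith
  then show ?thesis
  proof cases
    case 1 then show ?thesis using pda0 by (auto simp: fK_def)
  next
    case 2 then show ?thesis using r1 by (auto simp: fK_def)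
  next
    case 3 then show ?thesis using r2 by (auto simp: fK_def)
  next
    case 4 then show ?thesis using r3 by (auto simp: fK_def)
  next
    case 5 then show ?thesis using r4 by (auto simp: fK_def)
  next
    case 6 then show ?thesis using r5 by (auto simp: fK_def)
  qed
qed

lemma upper: "\<exists>R. is_PDA 4 K 2 {..<fK K} R"
proof -
  obtain R1 where A: "is_PDA 4 (6*(K div 6)) 2 {..<4*(K div 6)} R1" using blocks by blast
  obtain R2 where B: "is_PDA 4 (K mod 6) 2 {..<fK K - 4 * (K div 6)} R2" using tails by blast
  have "6*(K div 6) + K mod 6 = K" by simp
  moreover have "4*(K div 6) + (fK K - 4 * (K div 6)) = fK K" unfolding fK_def by simp
  ultimately show ?thesis using pda_union[OF A B] by metis
qed

lemma ceil_eq: "\<lceil>2 * real K / 3\<rceil> = int ((2*K + 2) div 3)"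
proof -
  define q where "q = (2*K+2) div 3"
  define r where "r = (2*K+2) mod 3"
  have e: "2*K+2 = 3*q + r" "r < 3" unfolding q_def r_def by simp_all
  have e': "2 * real K + 2 = 3 * real q + real r" using arg_cong[OF e(1), of real] by simp
  have "real r < 3" using e(2) by simp
  show ?thesis unfolding q_def[symmetric]
    by (rule ceiling_unique) (use e' \<open>real r < 3\<close> in auto)
qed

lemma s_eq:
  assumes "K \<ge> 1"
  shows "s_PDA 4 K 2 = fK K"
proof -
  have ex: "\<exists>(S::nat set) R. is_PDA 4 K 2 S R \<and> card S = fK K"
    using upper by fastforce
  have le: "s_PDA 4 K 2 \<le> fK K" unfolding s_PDA_def by (rule Least_le) (use ex in blast)
  obtain S :: "nat set" and R where P: "is_PDA 4 K 2 S R" and c: "card S = s_PDA 4 K 2"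
    using LeastI_ex[of "\<lambda>n. \<exists>(S::nat set) R. is_PDA 4 K 2 S R \<and> card S = n"] ex
    unfolding s_PDA_def by blast
  have l1: "2 * K \<le> 3 * s_PDA 4 K 2" using lower_all(1)[OF P] c by simp
  have l2: "3 * s_PDA 4 K 2 \<noteq> 2 * K + 1" using lower_all(2)[OF P] c by simp
  have l3: "3 * s_PDA 4 K 2 = 2 * K \<Longrightarrow> 6 dvd K" using lower_all(3)[OF P] c by simp
  show ?thesis by (rule arith_s[OF le l1 l2 l3])
qed

theorem mainTheorem14:
  fixes K :: nat
  assumes "K \<ge> 1"
  shows "int (s_PDA 4 K 2) =
    (if K mod 6 \<in> {0, 2, 5} then \<lceil>2 * real K / 3\<rceil> else \<lceil>2 * real K / 3\<rceil> + 1)"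
  unfolding s_eq[OF assms] ceil_eq fK_alt by simp


end
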